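(* Let $d\ge2$, $\bm\alpha=(\alpha_1,\dots,\alpha_d)\in(0,1)^d$, and let $C^{\mathrm{MO}}_{\bm\alpha}(\bm u)=\left(\prod_{j=1}^d u_j^{1-\alpha_j}\right)\min_{1\le j\le d}\{u_j^{\alpha_j}\}$, $\bm u\in[0,1]^d$, be the Marshall--Olkin copula, with survival copula $\hat C^{\mathrm{MO}}_{\bm\alpha}$. Then: (i) $\hat C^{\mathrm{MO}}_{\bm\alpha}$ admits the tail copula $\Lambda(\bm x;\hat C^{\mathrm{MO}}_{\bm\alpha})=\min_{1\le j\le d}\{\alpha_jx_j\}$, $\bm x\in(0,\infty)^d$. (ii) $\lambda^\ast(\hat C^{\mathrm{MO}}_{\bm\alpha})=\prod_{j=1}^d\alpha_j^{1/d}$. (iii) The maximizer of $\bm b\mapsto\Lambda(\bm b;\hat C^{\mathrm{MO}}_{\bm\alpha})$ over $\mathcal B$ is unique and equals $\bm b^\ast=\left(\frac{\prod_{j=1}^d\alpha_j^{1/d}}{\alpha_1},\dots,\frac{\prod_{j=1}^d\alpha_j^{1/d}}{\alpha_d}\right)\in\mathcal B$.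
   Context: For a $d$-dimensional copula $C$ and $\bm U\sim C$, the survival copula $\hat C$ is the distribution function of $(1-U_1,\dots,1-U_d)$. The (lower) tail copula of a copula $C$ is $\Lambda(\bm x;C)=\lim_{t\downarrow0}C(t\bm x)/t$, $\bm x\in(0,\infty)^d$, when the limit exists. Let $\mathcal B=\{\bm b\in(0,\infty)^d:\prod_{j=1}^d b_j=1\}$ and define the maximal tail concordance measure $\lambda^\ast(C)=\sup_{\bm b\in\mathcal B}\Lambda(\bm b;C)$. *)

theory Defs
  imports "HOL-Analysis.Analysis" "HOL-Probability.Probability"
begin

text \<open>Points of (0,1)^d etc. are vectors in real^'d; the dimension d is CARD('d).\<close>

definition unit_cube :: "(real^'d) set" where
  "unit_cube = {u. \<forall>j. 0 \<le> u$j \<and> u$j \<le> 1}"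

definition MO_copula :: "real^'d \<Rightarrow> real^'d \<Rightarrow> real" where
  "MO_copula \<alpha> u = (\<Prod>j\<in>UNIV. u$j powr (1 - \<alpha>$j)) * Min (range (\<lambda>j. u$j powr (\<alpha>$j)))"

definition cdf_vec :: "(real^'d) measure \<Rightarrow> real^'d \<Rightarrow> real" where
  "cdf_vec M u = measure M {x. \<forall>j. x$j \<le> u$j}"

text \<open>If M is the law of U, the survival copula is the cdf of (1-U_1,...,1-U_d).\<close>
definition survival_cdf :: "(real^'d) measure \<Rightarrow> real^'d \<Rightarrow> real" where
  "survival_cdf M u = measure M {x. \<forall>j. 1 - x$j \<le> u$j}"

definition tail_copula :: "(real^'d \<Rightarrow> real) \<Rightarrow> real^'d \<Rightarrow> real" where
  "tail_copula C x = Lim (at_right 0) (\<lambda>t. C (t *\<^sub>R x) / t)"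

definition calB :: "(real^'d) set" where
  "calB = {b. (\<forall>j. 0 < b$j) \<and> (\<Prod>j\<in>UNIV. b$j) = 1}"

definition max_tail_concordance :: "(real^'d \<Rightarrow> real) \<Rightarrow> real" where
  "max_tail_concordance C = (SUP b\<in>calB. tail_copula C b)"

end

theory Submission
  imports Defs
begin


lemma alt_sum_all0:
  assumes "finite I" "I \<noteq> {}"
  shows "(\<Sum>B\<in>Pow I. (-1::real)^card B) = 0"
proof -
  have "card {T. T \<subseteq> I \<and> {} \<subseteq> T \<and> even (card T)} = card {T. T \<subseteq> I \<and> {} \<subseteq> T \<and> odd (card T)}"
    using card_subsupersets_even_odd[of I "{}"] assms by auto
  then show ?thesis
    by (intro sum_alternating_cancels) (auto simp: assms Pow_def)
qed

lemma alt_sum_one: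
  assumes "finite I" "I \<noteq> {}"
  shows "(\<Sum>B | B \<subseteq> I \<and> B \<noteq> {}. (-1::real)^(card B + 1)) = 1"
proof -
  have e: "Pow I = insert {} {B. B \<subseteq> I \<and> B \<noteq> {}}" by auto
  have "0 = (\<Sum>B\<in>Pow I. (-1::real)^card B)" using alt_sum_all0[OF assms] by simp
  also have "\<dots> = 1 + (\<Sum>B | B \<subseteq> I \<and> B \<noteq> {}. (-1::real)^card B)"
    by (subst e, subst sum.insert) (auto simp: assms)
  finally have "(\<Sum>B | B \<subseteq> I \<and> B \<noteq> {}. (-1::real)^card B) = -1" by linarith
  then show ?thesis by (simp add: sum_negf)
qed

lemma alt_sum_elem:
  assumes "finite I" "j \<in> I" "card I \<ge> 2"
  shows "(\<Sum>B | B \<subseteq> I \<and> B \<noteq> {}. (-1::real)^(card B + 1) * (if j \<in> B then w else 0)) = 0"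
proof -
  have "{j} \<subset> I"
  proof -
    have "I \<noteq> {j}" using assms by auto
    then show ?thesis using assms by blast
  qed
  then have c: "card {T. T \<subseteq> I \<and> {j} \<subseteq> T \<and> even (card T)} = card {T. T \<subseteq> I \<and> {j} \<subseteq> T \<and> odd (card T)}"
    using card_subsupersets_even_odd[of I "{j}"] assms by auto
  have s0: "(\<Sum>B | B \<subseteq> I \<and> {j} \<subseteq> B. (-1::real)^card B) = 0"
    using c by (intro sum_alternating_cancels) (auto simp: assms)
  have "(\<Sum>B | B \<subseteq> I \<and> B \<noteq> {}. (-1::real)^(card B + 1) * (if j \<in> B then w else 0))
      = (\<Sum>B | B \<subseteq> I \<and> {j} \<subseteq> B. (-1::real)^(card B + 1) * w)"
    by (rule sum.mono_neutral_cong_right) (auto simp: assms)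
  also have "\<dots> = - w * (\<Sum>B | B \<subseteq> I \<and> {j} \<subseteq> B. (-1::real)^card B)"
    by (simp add: sum_distrib_left sum_negf mult_ac)
  finally show ?thesis using s0 by simp
qed

lemma maxmin_ie:
  fixes y :: "'a \<Rightarrow> real"
  assumes fin: "finite I" and ne: "I \<noteq> {}"
  shows "(\<Sum>B | B \<subseteq> I \<and> B \<noteq> {}. (-1)^(card B + 1) * Max (y ` B)) = Min (y ` I)"
proof -
  define K where "K = Max (y ` I) + 1"
  define L where "L = Min (y ` I)"
  have yK: "y j < K" if "j \<in> I" for j
  proof -
    have "y j \<le> Max (y ` I)" using that fin by simp
    then show ?thesis by (simp add: K_def)
  qed
  have yL: "L \<le> y j" if "j \<in> I" for j using that fin by (auto simp: L_def)
  interpret IE: Incl_Excl "\<lambda>S. S \<in> sets lborel \<and> S \<subseteq> {L..K}" "measure lborel"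
  proof
    fix S T :: "real set" assume "S \<in> sets lborel \<and> S \<subseteq> {L..K}" "T \<in> sets lborel \<and> T \<subseteq> {L..K}" "disjnt S T"
    moreover have "emeasure lborel S \<noteq> \<infinity>" "emeasure lborel T \<noteq> \<infinity>"
      using calculation emeasure_mono[of S "{L..K}" lborel] emeasure_mono[of T "{L..K}" lborel]
      by (auto simp: top_unique emeasure_lborel_Icc_eq)
    ultimately show "measure lborel (S \<union> T) = measure lborel S + measure lborel T"
      by (intro measure_Union) (auto simp: disjnt_def)
  qed auto
  have meas: "measure lborel {a..K} = K - a" if "a \<le> K" for a
    using that by (simp add: measure_def)
  have "measure lborel (\<Union> ((\<lambda>j. {y j..K}) ` I)) =
     (\<Sum>B | B \<subseteq> I \<and> B \<noteq> {}. (- 1) ^ (card B + 1) * measure lborel (\<Inter> ((\<lambda>j. {y j..K}) ` B)))"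
    using yL by (intro IE.restricted_indexed fin) auto
  moreover have "\<Union> ((\<lambda>j. {y j..K}) ` I) = {L..K}"
  proof -
    have "L \<in> y ` I" using fin ne by (simp add: L_def)
    then obtain k where "k \<in> I" "y k = L" by auto
    then show ?thesis using yL by fastforce
  qed
  moreover have "\<Inter> ((\<lambda>j. {y j..K}) ` B) = {Max (y ` B)..K}" if "B \<subseteq> I" "B \<noteq> {}" for B
  proof -
    have fB: "finite B" using that fin finite_subset by blast
    have "Max (y ` B) \<in> y ` B" using fB that by simp
    then obtain k where "k \<in> B" "y k = Max (y ` B)" by auto
    have le: "\<forall>j\<in>B. y j \<le> Max (y ` B)" using fB by simp
    show ?thesis
    proof (intro set_eqI iffI)
      fix z assume "z \<in> \<Inter> ((\<lambda>j. {y j..K}) ` B)"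
      then show "z \<in> {Max (y ` B)..K}" using \<open>k \<in> B\<close> \<open>y k = Max (y ` B)\<close> by auto
    next
      fix z assume "z \<in> {Max (y ` B)..K}"
      then show "z \<in> \<Inter> ((\<lambda>j. {y j..K}) ` B)" using le by force
    qed
  qed
  ultimately have "K - L = (\<Sum>B | B \<subseteq> I \<and> B \<noteq> {}. (- 1) ^ (card B + 1) * (K - Max (y ` B)))"
  proof -
    assume a: "measure lborel (\<Union> ((\<lambda>j. {y j..K}) ` I)) =
     (\<Sum>B | B \<subseteq> I \<and> B \<noteq> {}. (- 1) ^ (card B + 1) * measure lborel (\<Inter> ((\<lambda>j. {y j..K}) ` B)))"
      and b: "\<Union> ((\<lambda>j. {y j..K}) ` I) = {L..K}"
      and c: "\<And>B. B \<subseteq> I \<Longrightarrow> B \<noteq> {} \<Longrightarrow> \<Inter> ((\<lambda>j. {y j..K}) ` B) = {Max (y ` B)..K}"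
    obtain j0 where "j0 \<in> I" using ne by blast
    then have "L \<le> K" using yL[of j0] yK[of j0] by linarith
    have "(\<Sum>B | B \<subseteq> I \<and> B \<noteq> {}. (- 1) ^ (card B + 1) * measure lborel (\<Inter> ((\<lambda>j. {y j..K}) ` B)))
       = (\<Sum>B | B \<subseteq> I \<and> B \<noteq> {}. (- 1) ^ (card B + 1) * (K - Max (y ` B)))"
    proof (rule sum.cong[OF refl])
      fix B assume B: "B \<in> {B. B \<subseteq> I \<and> B \<noteq> {}}"
      have fB: "finite B" using B fin finite_subset by blast
      have "Max (y ` B) \<le> K" using B fB yK by (auto simp: Max_le_iff less_imp_le)
      then show "(- 1) ^ (card B + 1) * measure lborel (\<Inter> ((\<lambda>j. {y j..K}) ` B)) = (- 1) ^ (card B + 1) * (K - Max (y ` B))"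
        using c[of B] B meas by auto
    qed
    then show ?thesis using a b meas[OF \<open>L \<le> K\<close>] by simp
  qed
  also have "\<dots> = K * (\<Sum>B | B \<subseteq> I \<and> B \<noteq> {}. (- 1::real) ^ (card B + 1)) - (\<Sum>B | B \<subseteq> I \<and> B \<noteq> {}. (-1)^(card B + 1) * Max (y ` B))"
    by (simp only: sum_distrib_left flip: sum_subtractf) (intro sum.cong refl, simp add: algebra_simps)
  finally show ?thesis using alt_sum_one[OF fin ne] by (simp add: L_def)
qed



lemma dq_powr:
  fixes c a :: real
  shows "((\<lambda>t. ((1 - t*c) powr a - 1)/t) \<longlongrightarrow> -(a*c)) (at_right 0)"
proof -
  have "DERIV (\<lambda>t. (1 - t*c) powr a) 0 :> a * (1 - 0*c) powr (a - of_nat 1) * (-c)"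
    by (rule DERIV_fun_powr) (auto intro!: derivative_eq_intros)
  then have "((\<lambda>y. ((1 - y*c) powr a - (1 - 0*c) powr a) / (y - 0)) \<longlongrightarrow> a * (1 - 0*c) powr (a - of_nat 1) * (-c)) (at 0)"
    by (rule has_field_derivative_iff[THEN iffD1])
  then have "((\<lambda>y. ((1 - y*c) powr a - (1 - 0*c) powr a) / (y - 0)) \<longlongrightarrow> a * (1 - 0*c) powr (a - of_nat 1) * (-c)) (at_right 0)"
    by (rule tendsto_mono[OF at_le, rotated]) simp
  then show ?thesis by simp
qed

lemma dq_to_one:
  fixes g :: "real \<Rightarrow> real"
  assumes "((\<lambda>t. (g t - 1)/t) \<longlongrightarrow> d) (at_right 0)"
  shows "(g \<longlongrightarrow> 1) (at_right 0)"
proof -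
  have "((\<lambda>t. 1 + t * ((g t - 1)/t)) \<longlongrightarrow> 1 + 0 * d) (at_right 0)"
    by (intro tendsto_intros assms)
  moreover have "eventually (\<lambda>t. 1 + t * ((g t - 1)/t) = g t) (at_right 0)"
    using eventually_at_right_less[of "0::real"] by eventually_elim simp
  ultimately show ?thesis by (simp add: tendsto_cong)
qed

lemma dq_mult:
  fixes f g :: "real \<Rightarrow> real"
  assumes f: "((\<lambda>t. (f t - 1)/t) \<longlongrightarrow> p) (at_right 0)"
    and g: "((\<lambda>t. (g t - 1)/t) \<longlongrightarrow> q) (at_right 0)"
  shows "((\<lambda>t. (f t * g t - 1)/t) \<longlongrightarrow> p + q) (at_right 0)"
proof -
  have "((\<lambda>t. ((f t - 1)/t) * g t + (g t - 1)/t) \<longlongrightarrow> p * 1 + q) (at_right 0)"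
    by (intro tendsto_intros f g dq_to_one[OF g])
  moreover have "((f t - 1)/t) * g t + (g t - 1)/t = (f t * g t - 1)/t" for t
    by (simp add: diff_divide_distrib add_divide_distrib algebra_simps)
  ultimately show ?thesis by simp
qed

lemma dq_prod:
  fixes f :: "'i \<Rightarrow> real \<Rightarrow> real"
  assumes "finite I" "\<And>i. i \<in> I \<Longrightarrow> ((\<lambda>t. (f i t - 1)/t) \<longlongrightarrow> d i) (at_right 0)"
  shows "((\<lambda>t. ((\<Prod>i\<in>I. f i t) - 1)/t) \<longlongrightarrow> (\<Sum>i\<in>I. d i)) (at_right 0)"
  using assms
proof (induction I rule: finite_induct)
  case empty
  then show ?case by simp
next
  case (insert a A)
  have "((\<lambda>t. (f a t * (\<Prod>i\<in>A. f i t) - 1)/t) \<longlongrightarrow> d a + (\<Sum>i\<in>A. d i)) (at_right 0)"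
    by (rule dq_mult) (use insert in auto)
  then show ?case using insert by simp
qed

lemma tendsto_Min_fin:
  fixes f :: "'i \<Rightarrow> 'b \<Rightarrow> real"
  assumes "finite I" "I \<noteq> {}" "\<And>i. i \<in> I \<Longrightarrow> (f i \<longlongrightarrow> l i) F"
  shows "((\<lambda>x. Min ((\<lambda>i. f i x) ` I)) \<longlongrightarrow> Min (l ` I)) F"
  using assms
proof (induction I rule: finite_ne_induct)
  case (singleton x)
  then show ?case by simp
next
  case (insert a A)
  have "((\<lambda>x. min (f a x) (Min ((\<lambda>i. f i x) ` A))) \<longlongrightarrow> min (l a) (Min (l ` A))) F"
    by (intro tendsto_min) (use insert in auto)
  then show ?case using insert by simp
qed

lemma dq_Min:
  fixes h :: "'i \<Rightarrow> real \<Rightarrow> real"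
  assumes "finite I" "I \<noteq> {}" "\<And>i. i \<in> I \<Longrightarrow> ((\<lambda>t. (h i t - 1)/t) \<longlongrightarrow> d i) (at_right 0)"
  shows "((\<lambda>t. (Min ((\<lambda>i. h i t) ` I) - 1)/t) \<longlongrightarrow> Min (d ` I)) (at_right 0)"
proof -
  have "((\<lambda>t. Min ((\<lambda>i. (h i t - 1)/t) ` I)) \<longlongrightarrow> Min (d ` I)) (at_right 0)"
    by (rule tendsto_Min_fin) (use assms in auto)
  moreover have "eventually (\<lambda>t. Min ((\<lambda>i. (h i t - 1)/t) ` I) = (Min ((\<lambda>i. h i t) ` I) - 1)/t) (at_right 0)"
    using eventually_at_right_less[of "0::real"]
  proof eventually_elim
    case (elim t)
    have m: "mono (\<lambda>z::real. (z - 1)/t)" using elim by (auto intro!: monoI divide_right_mono)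
    have "(Min ((\<lambda>i. h i t) ` I) - 1)/t = Min ((\<lambda>z. (z - 1)/t) ` ((\<lambda>i. h i t) ` I))"
      by (rule mono_Min_commute[OF m]) (use assms in auto)
    then show ?case by (simp add: image_image)
  qed
  ultimately show ?thesis by (simp add: tendsto_cong)
qed



lemma analytic:
  fixes \<alpha> x :: "real^'d"
  assumes d2: "CARD('d) \<ge> 2" and alpha: "\<forall>j. 0 < \<alpha>$j \<and> \<alpha>$j < 1" and xpos: "\<forall>j. 0 < x$j"
  shows "((\<lambda>t. \<Sum>B | B \<subseteq> UNIV \<and> B \<noteq> {}. (-1)^(card B + 1) *
             ((1 - MO_copula \<alpha> (\<chi> j. if j \<in> B then 1 - t * x$j else 1)) / t))
          \<longlongrightarrow> Min (range (\<lambda>j. \<alpha>$j * x$j))) (at_right 0)"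
proof -
  define c where "c B j = (if j \<in> B then x$j else 0)" for B j
  define y where "y j = \<alpha>$j * x$j" for j
  have MOeq: "MO_copula \<alpha> (\<chi> j. if j \<in> B then 1 - t * x$j else 1) =
      (\<Prod>j\<in>UNIV. (1 - t * c B j) powr (1 - \<alpha>$j)) * Min (range (\<lambda>j. (1 - t * c B j) powr (\<alpha>$j)))" for B t
  proof -
    have "(\<chi> j. if j \<in> B then 1 - t * x$j else 1) = (\<chi> j. 1 - t * c B j)" by (simp add: c_def vec_eq_iff)
    then show ?thesis by (simp add: MO_copula_def)
  qed
  define D where "D B = (\<Sum>j\<in>UNIV. -((1 - \<alpha>$j) * c B j)) + Min (range (\<lambda>j. -(\<alpha>$j * c B j)))" for B
  have DB: "((\<lambda>t. (MO_copula \<alpha> (\<chi> j. if j \<in> B then 1 - t * x$j else 1) - 1)/t) \<longlongrightarrow> D B) (at_right 0)" for B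
    unfolding MOeq D_def
    by (intro dq_mult dq_prod dq_Min dq_powr) auto
  have lim: "((\<lambda>t. \<Sum>B | B \<subseteq> UNIV \<and> B \<noteq> {}. (-1)^(card B + 1) *
             ((1 - MO_copula \<alpha> (\<chi> j. if j \<in> B then 1 - t * x$j else 1)) / t))
          \<longlongrightarrow> (\<Sum>B | B \<subseteq> UNIV \<and> B \<noteq> {}. (-1)^(card B + 1) * (- D B))) (at_right 0)"
  proof -
    have e: "(1 - m) / t = - ((m - 1) / t)" for m t :: real by (simp add: minus_divide_left)
    show ?thesis unfolding e by (intro tendsto_sum tendsto_mult tendsto_const tendsto_minus DB)
  qed
  have ypos: "0 < y j" for j using alpha xpos by (simp add: y_def)
  have Dval: "- D B = (\<Sum>j\<in>UNIV. (if j \<in> B then (1 - \<alpha>$j) * x$j else 0)) + Max (y ` B)" if "B \<noteq> {}" for B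
  proof -
    have fB: "finite B" by simp
    have mx: "Max (y ` B) \<in> y ` B" using that by simp
    then obtain k where k: "k \<in> B" "y k = Max (y ` B)" by auto
    have le: "\<forall>j\<in>B. y j \<le> Max (y ` B)" by simp
    have "Min (range (\<lambda>j. -(\<alpha>$j * c B j))) = - Max (y ` B)"
    proof (rule Min_eqI)
      show "finite (range (\<lambda>j. -(\<alpha>$j * c B j)))" by simp
      show "- Max (y ` B) \<in> range (\<lambda>j. -(\<alpha>$j * c B j))"
        using k by (auto simp: c_def y_def image_iff intro!: exI[of _ k])
      fix z assume "z \<in> range (\<lambda>j. -(\<alpha>$j * c B j))"
      then obtain j where z: "z = -(\<alpha>$j * c B j)" by auto
      show "- Max (y ` B) \<le> z"
      proof (cases "j \<in> B")
        case True then show ?thesis using le z by (auto simp: c_def y_def)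
      next
        case False then show ?thesis using z ypos[of k] k by (auto simp: c_def)
      qed
    qed
    moreover have "(\<Sum>j\<in>UNIV. -((1 - \<alpha>$j) * c B j)) = - (\<Sum>j\<in>UNIV. (if j \<in> B then (1 - \<alpha>$j) * x$j else 0))"
      unfolding sum_negf[symmetric] by (rule sum.cong) (auto simp: c_def)
    ultimately show ?thesis by (simp add: D_def)
  qed
  have "(\<Sum>B | B \<subseteq> UNIV \<and> B \<noteq> {}. (-1)^(card B + 1) * (- D B))
      = (\<Sum>B | B \<subseteq> UNIV \<and> B \<noteq> {}. (-1)^(card B + 1) * (\<Sum>j\<in>UNIV. (if j \<in> B then (1 - \<alpha>$j) * x$j else 0)))
        + (\<Sum>B | B \<subseteq> UNIV \<and> B \<noteq> {}. (-1)^(card B + 1) * Max (y ` B))"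
    by (subst sum.distrib[symmetric], rule sum.cong) (auto simp: Dval distrib_left)
  also have "(\<Sum>B | B \<subseteq> UNIV \<and> B \<noteq> {}. (-1)^(card B + 1) * (\<Sum>j\<in>UNIV. (if j \<in> B then (1 - \<alpha>$j) * x$j else 0))) = 0"
  proof -
    have "(\<Sum>B | B \<subseteq> UNIV \<and> B \<noteq> {}. (-1)^(card B + 1) * (\<Sum>j\<in>UNIV. (if j \<in> B then (1 - \<alpha>$j) * x$j else 0)))
        = (\<Sum>j\<in>UNIV. \<Sum>B | B \<subseteq> UNIV \<and> B \<noteq> {}. (-1::real)^(card B + 1) * (if j \<in> B then (1 - \<alpha>$j) * x$j else 0))"
      by (simp add: sum_distrib_left) (rule sum.swap)
    also have "\<dots> = 0"
      by (intro sum.neutral ballI alt_sum_elem) (use d2 in auto)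
    finally show ?thesis .
  qed
  also have "(\<Sum>B | B \<subseteq> UNIV \<and> B \<noteq> {}. (-1)^(card B + 1) * Max (y ` B)) = Min (range y)"
    by (rule maxmin_ie) auto
  finally show ?thesis using lim by (simp add: y_def)
qed



lemma surv_formula:
  fixes \<alpha> :: "real^'d" and M :: "(real^'d) measure" and x :: "real^'d" and t :: real
  assumes alpha: "\<forall>j. 0 < \<alpha>$j \<and> \<alpha>$j < 1"
    and prob: "prob_space M" and sets: "sets M = sets borel"
    and law: "\<forall>u\<in>unit_cube. cdf_vec M u = MO_copula \<alpha> u"
    and xpos: "\<forall>j. 0 < x$j" and t: "0 < t" and small: "\<forall>j. t * x$j < 1"
  shows "survival_cdf M (t *\<^sub>R x) = 1 - (\<Sum>B | B \<subseteq> UNIV \<and> B \<noteq> {}. (-1)^(card B + 1) *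
             MO_copula \<alpha> (\<chi> j. if j \<in> B then 1 - t * x$j else 1))"
proof -
  interpret P: prob_space M by (rule prob)
  have space: "space M = UNIV" using sets_eq_imp_space_eq[OF sets] by simp
  have closedM: "S \<in> sets M" if "closed S" for S using sets that by (simp add: borel_closed)
  have openM: "S \<in> sets M" if "open S" for S using sets that by (simp add: borel_open)
  have cl_le: "closed {y::real^'d. \<forall>j. y$j \<le> u$j}" for u
    by (intro closed_Collect_all closed_Collect_le continuous_intros)
  have cl_le1: "closed {y::real^'d. y$j \<le> c}" for j c
    by (intro closed_Collect_le continuous_intros)
  have op_less: "open {y::real^'d. y$j < c}" for j c
    by (intro open_Collect_less continuous_intros)
  have cdfM: "measure M {y. \<forall>j. y$j \<le> u$j} = MO_copula \<alpha> u" if "u \<in> unit_cube" for u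
    using law that by (simp add: cdf_vec_def)
  have one_cube: "((\<chi> j. 1) :: real^'d) \<in> unit_cube" by (simp add: unit_cube_def)
  have "MO_copula \<alpha> (\<chi> j. 1) = 1" by (simp add: MO_copula_def)
  then have "measure M {y. \<forall>j. y$j \<le> 1} = 1" using cdfM[OF one_cube] by simp
  then have AE1: "AE y in M. \<forall>j. y$j \<le> 1" using P.AE_prob_1 by force
  have marg: "measure M {y. y$j \<le> a} = a" if a: "0 < a" "a \<le> 1" for j a
  proof -
    define u where "u = (\<chi> i. if i = j then a else (1::real))"
    have uc: "u \<in> unit_cube" using a by (simp add: unit_cube_def u_def)
    have pr: "(\<Prod>i\<in>UNIV. u$i powr (1 - \<alpha>$i)) = a powr (1 - \<alpha>$j)"
    proof -
      have "(\<Prod>i\<in>UNIV. u$i powr (1 - \<alpha>$i)) = (\<Prod>i\<in>UNIV. if i = j then a powr (1 - \<alpha>$i) else 1)"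
        by (rule prod.cong) (auto simp: u_def)
      then show ?thesis by simp
    qed
    have mn: "Min (range (\<lambda>i. u$i powr (\<alpha>$i))) = a powr (\<alpha>$j)"
    proof (rule Min_eqI)
      show "finite (range (\<lambda>i. u$i powr (\<alpha>$i)))" by simp
      show "a powr (\<alpha>$j) \<in> range (\<lambda>i. u$i powr (\<alpha>$i))"
        by (rule range_eqI[of _ _ j]) (simp add: u_def)
      fix z assume "z \<in> range (\<lambda>i. u$i powr (\<alpha>$i))"
      then obtain i where z: "z = u$i powr (\<alpha>$i)" by auto
      have "a powr (\<alpha>$j) \<le> 1" using a alpha[rule_format, of j] by (intro powr_le1) auto
      then show "a powr (\<alpha>$j) \<le> z" using z by (auto simp: u_def)
    qed
    have "MO_copula \<alpha> u = a powr (1 - \<alpha>$j) * a powr (\<alpha>$j)" by (simp add: MO_copula_def pr mn)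
    also have "\<dots> = a" using a by (simp add: powr_add[symmetric])
    finally have mo: "MO_copula \<alpha> u = a" .
    have "measure M {y. y$j \<le> a} = measure M {y. \<forall>i. y$i \<le> u$i}"
    proof (rule measure_eq_AE)
      show "AE y in M. (y \<in> {y. y$j \<le> a}) = (y \<in> {y. \<forall>i. y$i \<le> u$i})"
        using AE1 by eventually_elim (auto simp: u_def)
    qed (auto intro!: closedM cl_le cl_le1)
    then show ?thesis using cdfM[OF uc] mo by simp
  qed
  have atom: "measure M {y. y$j = a} = 0" if a: "0 < a" "a \<le> 1" for j a
  proof (rule ccontr)
    assume ne: "measure M {y. y$j = a} \<noteq> 0"
    define m where "m = measure M {y. y$j = a}"
    have "m \<ge> 0" by (simp add: m_def)
    moreover from ne have "m \<noteq> 0" by (simp add: m_def)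
    ultimately have mpos: "m > 0" by simp
    define e where "e = min (m/2) (a/2)"
    have e: "0 < e" "e < a" "e < m" using a mpos by (auto simp: e_def)
    have s1: "{y. y$j \<le> c} \<in> sets M" for c by (intro closedM cl_le1)
    have "m \<le> measure M ({y. y$j \<le> a} - {y. y$j \<le> a - e})"
      unfolding m_def using e
      by (intro P.finite_measure_mono) (auto intro!: sets.Diff s1)
    also have "\<dots> = measure M {y. y$j \<le> a} - measure M {y. y$j \<le> a - e}"
      using e by (intro P.finite_measure_Diff) (auto intro!: s1)
    also have "\<dots> = e" using marg[of a j] marg[of "a - e" j] a e by simp
    finally show False using e by simp
  qed
  have AEatom: "AE y in M. y$j \<noteq> a" if a: "0 < a" "a \<le> 1" for j a
  proof -
    have "{y. y$j = a} \<in> null_sets M"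
      using atom[OF a, of j] by (intro null_setsI) (auto simp: P.emeasure_eq_measure intro!: closedM closed_Collect_eq continuous_intros)
    from AE_not_in[OF this] show ?thesis by simp
  qed
  define a where "a j = 1 - t * x$j" for j
  have a01: "0 < a j" "a j < 1" for j using small xpos t by (auto simp: a_def)
  define X where "X j = {y. y$j < a j}" for j
  have Xopen: "open (X j)" for j by (simp add: X_def op_less)
  have AEall: "AE y in M. \<forall>j. y$j \<le> 1 \<and> y$j \<noteq> a j"
  proof -
    have "AE y in M. \<forall>j\<in>UNIV. y$j \<noteq> a j"
    proof (rule AE_finite_allI)
      fix j :: 'd
      show "AE y in M. y$j \<noteq> a j" using AEatom[of "a j" j] a01[of j] by simp
    qed simp
    then show ?thesis using AE1 by eventually_elim auto
  qed
  interpret IE: Incl_Excl "\<lambda>S. S \<in> sets M" "measure M"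
  proof
    fix S T assume "S \<in> sets M" "T \<in> sets M" "disjnt S T"
    then show "measure M (S \<union> T) = measure M S + measure M T"
      by (intro P.finite_measure_Union) (auto simp: disjnt_def)
  qed auto
  have "survival_cdf M (t *\<^sub>R x) = measure M (space M - \<Union> (X ` UNIV))"
    unfolding survival_cdf_def
  proof (rule arg_cong[where f = "measure M"], rule set_eqI)
    fix y :: "real^'d"
    have "(\<forall>j. 1 - y$j \<le> t * x$j) \<longleftrightarrow> (\<forall>j. \<not> y$j < a j)" by (auto simp: a_def not_less algebra_simps)
    then show "(y \<in> {y. \<forall>j. 1 - y $ j \<le> (t *\<^sub>R x) $ j}) = (y \<in> space M - \<Union> (X ` UNIV))"
      by (auto simp: space X_def)
  qed
  also have "\<dots> = 1 - measure M (\<Union> (X ` UNIV))"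
    by (intro P.prob_compl openM open_UN) (simp add: Xopen)
  also have "measure M (\<Union> (X ` UNIV)) = (\<Sum>B | B \<subseteq> UNIV \<and> B \<noteq> {}. (- 1) ^ (card B + 1) * measure M (\<Inter> (X ` B)))"
    by (rule IE.restricted_indexed) (auto intro!: openM Xopen)
  also have "\<dots> = (\<Sum>B | B \<subseteq> UNIV \<and> B \<noteq> {}. (-1)^(card B + 1) *
             MO_copula \<alpha> (\<chi> j. if j \<in> B then 1 - t * x$j else 1))"
  proof (rule sum.cong[OF refl])
    fix B :: "'d set"
    define v where "v = (\<chi> j. if j \<in> B then a j else 1)"
    have sB: "\<Inter> (X ` B) \<in> sets M" by (rule openM) (auto intro!: open_INT Xopen)
    have vc: "v \<in> unit_cube" using a01 by (simp add: unit_cube_def v_def less_imp_le)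
    have "measure M (\<Inter> (X ` B)) = measure M {y. \<forall>j. y$j \<le> v$j}"
    proof (rule measure_eq_AE)
      show "AE y in M. (y \<in> \<Inter> (X ` B)) = (y \<in> {y. \<forall>j. y$j \<le> v$j})"
        using AEall
      proof eventually_elim
        case (elim y)
        show ?case
        proof
          assume "y \<in> \<Inter> (X ` B)"
          then show "y \<in> {y. \<forall>j. y$j \<le> v$j}" using elim by (auto simp: X_def v_def less_imp_le)
        next
          assume asm: "y \<in> {y. \<forall>j. y$j \<le> v$j}"
          have "y$j < a j" if "j \<in> B" for j
          proof -
            have "y$j \<le> v$j" using asm by simp
            then have "y$j \<le> a j" using that by (simp add: v_def)
            moreover have "y$j \<noteq> a j" using elim by simp
            ultimately show ?thesis by simp
          qed
          then show "y \<in> \<Inter> (X ` B)" by (auto simp: X_def)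
        qed
      qed
    qed (simp_all add: sB closedM[OF cl_le])
    also have "\<dots> = MO_copula \<alpha> (\<chi> j. if j \<in> B then 1 - t * x$j else 1)"
    proof -
      have "v = (\<chi> j. if j \<in> B then 1 - t * x$j else 1)" unfolding v_def a_def by simp
      then show ?thesis using cdfM[OF vc] by simp
    qed
    finally show "(-1)^(card B + 1) * measure M (\<Inter> (X ` B)) = (-1)^(card B + 1) *
             MO_copula \<alpha> (\<chi> j. if j \<in> B then 1 - t * x$j else 1)" by simp
  qed
  finally show ?thesis .
qed



lemma tail_limit:
  fixes \<alpha> :: "real^'d" and M :: "(real^'d) measure" and x :: "real^'d"
  assumes d2: "CARD('d) \<ge> 2"
    and alpha: "\<forall>j. 0 < \<alpha>$j \<and> \<alpha>$j < 1"
    and prob: "prob_space M" and sets: "sets M = sets borel"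
    and law: "\<forall>u\<in>unit_cube. cdf_vec M u = MO_copula \<alpha> u"
    and xpos: "\<forall>j. 0 < x$j"
  shows "((\<lambda>t. survival_cdf M (t *\<^sub>R x) / t) \<longlongrightarrow> Min (range (\<lambda>j. \<alpha>$j * x$j))) (at_right 0)"
proof -
  define S where "S = (\<Sum>j\<in>UNIV. x$j)"
  have S0: "0 \<le> S" using xpos by (simp add: S_def sum_nonneg less_imp_le)
  have xS: "x$j \<le> S" for j
    unfolding S_def by (rule member_le_sum) (use xpos less_imp_le in auto)
  have ev: "eventually (\<lambda>t. t \<in> {0<..<1/(S+1)}) (at_right (0::real))"
    by (rule eventually_at_right_real) (use S0 in simp)
  have "eventually (\<lambda>t. (\<Sum>B | B \<subseteq> UNIV \<and> B \<noteq> {}. (-1)^(card B + 1) *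
             ((1 - MO_copula \<alpha> (\<chi> j. if j \<in> B then 1 - t * x$j else 1)) / t))
       = survival_cdf M (t *\<^sub>R x) / t) (at_right 0)"
    using ev
  proof eventually_elim
    case (elim t)
    then have t: "0 < t" "t * (S + 1) < 1" using S0 by (auto simp: field_simps)
    have small: "\<forall>j. t * x$j < 1"
    proof
      fix j
      have "t * x$j \<le> t * S" using t xS[of j] by (intro mult_left_mono) auto
      also have "\<dots> < 1" using t by (simp add: algebra_simps)
      finally show "t * x$j < 1" .
    qed
    have f: "survival_cdf M (t *\<^sub>R x) = 1 - (\<Sum>B | B \<subseteq> UNIV \<and> B \<noteq> {}. (-1)^(card B + 1) *
             MO_copula \<alpha> (\<chi> j. if j \<in> B then 1 - t * x$j else 1))"
      by (rule surv_formula[OF alpha prob sets law xpos t(1) small])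
    have one: "(\<Sum>B | B \<subseteq> (UNIV::'d set) \<and> B \<noteq> {}. (-1::real)^(card B + 1)) = 1"
      by (rule alt_sum_one) auto
    have "(\<Sum>B | B \<subseteq> UNIV \<and> B \<noteq> {}. (-1)^(card B + 1) *
             ((1 - MO_copula \<alpha> (\<chi> j. if j \<in> B then 1 - t * x$j else 1)) / t))
        = ((\<Sum>B | B \<subseteq> (UNIV::'d set) \<and> B \<noteq> {}. (-1::real)^(card B + 1)) - (\<Sum>B | B \<subseteq> UNIV \<and> B \<noteq> {}. (-1)^(card B + 1) *
             MO_copula \<alpha> (\<chi> j. if j \<in> B then 1 - t * x$j else 1))) / t"
    proof -
      let ?s = "\<lambda>B::'d set. (-1::real)^(card B + 1)"
      let ?m = "\<lambda>B::'d set. MO_copula \<alpha> (\<chi> j. if j \<in> B then 1 - t * x$j else 1)"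
      have "(\<Sum>B | B \<subseteq> UNIV \<and> B \<noteq> {}. ?s B * ((1 - ?m B) / t)) = (\<Sum>B | B \<subseteq> UNIV \<and> B \<noteq> {}. (?s B - ?s B * ?m B) / t)"
        by (intro sum.cong refl) (simp add: right_diff_distrib)
      also have "\<dots> = (\<Sum>B | B \<subseteq> UNIV \<and> B \<noteq> {}. ?s B - ?s B * ?m B) / t"
        by (rule sum_divide_distrib[symmetric])
      also have "\<dots> = ((\<Sum>B | B \<subseteq> UNIV \<and> B \<noteq> {}. ?s B) - (\<Sum>B | B \<subseteq> UNIV \<and> B \<noteq> {}. ?s B * ?m B)) / t"
        by (simp only: sum_subtractf)
      finally show ?thesis by simp
    qed
    then show ?case using f one by simp
  qed
  then show ?thesis
    using analytic[OF d2 alpha xpos] by (rule tendsto_cong[THEN iffD1])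
qed

theorem proposition3p2:
  fixes \<alpha> :: "real^'d" and M :: "(real^'d) measure"
  assumes d2: "CARD('d) \<ge> 2"
    and alpha: "\<forall>j. 0 < \<alpha>$j \<and> \<alpha>$j < 1"
    and prob: "prob_space M" and sets: "sets M = sets borel"
    and law: "\<forall>u\<in>unit_cube. cdf_vec M u = MO_copula \<alpha> u"
  shows "(\<forall>x. (\<forall>j. 0 < x$j) \<longrightarrow>
            ((\<lambda>t. survival_cdf M (t *\<^sub>R x) / t) \<longlongrightarrow> Min (range (\<lambda>j. \<alpha>$j * x$j))) (at_right 0))
       \<and> max_tail_concordance (survival_cdf M) = (\<Prod>j\<in>UNIV. \<alpha>$j powr (1 / real CARD('d)))
       \<and> (let bstar = (\<chi> j. (\<Prod>i\<in>UNIV. \<alpha>$i powr (1 / real CARD('d))) / \<alpha>$j) in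
            bstar \<in> calB
            \<and> tail_copula (survival_cdf M) bstar = max_tail_concordance (survival_cdf M)
            \<and> (\<forall>b\<in>calB. tail_copula (survival_cdf M) b = max_tail_concordance (survival_cdf M) \<longrightarrow> b = bstar))"
proof -
  define n where "n = real CARD('d)"
  have npos: "n > 0" using d2 by (simp add: n_def)
  define G where "G = (\<Prod>j\<in>UNIV. \<alpha>$j powr (1 / n))"
  define A where "A = (\<Prod>j\<in>UNIV. \<alpha>$j)"
  have apos: "0 < \<alpha>$j" for j using alpha by simp
  have Apos: "A > 0" unfolding A_def using apos by (simp add: prod_pos)
  have GA: "G = A powr (1/n)" unfolding G_def A_def by (simp add: prod_powr_distrib)
  have Gpos: "G > 0" using Apos GA by simp
  have Gn: "G ^ CARD('d) = A"
  proof -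
    have "G ^ CARD('d) = G powr n" using Gpos by (simp add: n_def powr_realpow)
    also have "\<dots> = A" using GA npos Apos by (simp add: powr_powr)
    finally show ?thesis .
  qed
  have lim: "\<forall>x. (\<forall>j. 0 < x$j) \<longrightarrow>
            ((\<lambda>t. survival_cdf M (t *\<^sub>R x) / t) \<longlongrightarrow> Min (range (\<lambda>j. \<alpha>$j * x$j))) (at_right 0)"
    using tail_limit[OF d2 alpha prob sets law] by blast
  have tail: "tail_copula (survival_cdf M) b = Min (range (\<lambda>j. \<alpha>$j * b$j))" if "b \<in> calB" for b
  proof -
    have "\<forall>j. 0 < b$j" using that by (simp add: calB_def)
    then show ?thesis unfolding tail_copula_def using lim
      by (intro tendsto_Lim) (auto simp: trivial_limit_at_right_real)
  qed
  have prodb: "(\<Prod>j\<in>UNIV. b$j) = 1" "\<forall>j. 0 < b$j" if "b \<in> calB" for b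
    using that by (auto simp: calB_def)
  have minle: "Min (range (\<lambda>j. \<alpha>$j * b$j)) \<le> G" if b: "b \<in> calB" for b
  proof -
    define m where "m = Min (range (\<lambda>j. \<alpha>$j * b$j))"
    have mle: "m \<le> \<alpha>$j * b$j" for j by (simp add: m_def)
    have "m \<in> range (\<lambda>j. \<alpha>$j * b$j)" unfolding m_def by (rule Min_in) auto
    then have mpos: "m > 0" using prodb(2)[OF b] apos by auto
    have "m ^ CARD('d) = (\<Prod>j\<in>(UNIV::'d set). m)" by simp
    also have "\<dots> \<le> (\<Prod>j\<in>(UNIV::'d set). \<alpha>$j * b$j)"
      by (rule prod_mono) (use mpos mle in auto)
    also have "\<dots> = A" using prodb(1)[OF b] by (simp add: A_def prod.distrib)
    finally have "m ^ CARD('d) \<le> A" .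
    then have "m powr n \<le> A" using mpos by (simp add: n_def powr_realpow)
    then have "(m powr n) powr (1/n) \<le> A powr (1/n)" using mpos npos by (intro powr_mono2) auto
    then have "m \<le> A powr (1/n)" using mpos npos by (simp add: powr_powr)
    then show ?thesis using GA by (simp add: m_def)
  qed
  define bstar where "bstar = (\<chi> j. G / \<alpha>$j)"
  have bstar_in: "bstar \<in> calB"
  proof -
    have "(\<Prod>j\<in>UNIV. bstar$j) = G ^ CARD('d) / A"
      by (simp add: bstar_def A_def prod_dividef)
    then show ?thesis using Gn Apos Gpos apos by (simp add: calB_def bstar_def)
  qed
  have tail_bstar: "tail_copula (survival_cdf M) bstar = G"
  proof -
    have anz: "\<alpha>$j \<noteq> 0" for j using apos[of j] by simp
    have "range (\<lambda>j. \<alpha>$j * bstar$j) = {G}" by (auto simp: bstar_def anz)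
    then show ?thesis using tail[OF bstar_in] by simp
  qed
  have maxeq: "max_tail_concordance (survival_cdf M) = G"
    unfolding max_tail_concordance_def
  proof (rule cSup_eq_maximum)
    show "G \<in> tail_copula (survival_cdf M) ` calB" using bstar_in tail_bstar by force
    fix z assume "z \<in> tail_copula (survival_cdf M) ` calB"
    then show "z \<le> G" using tail minle by auto
  qed
  have uniq: "b = bstar" if b: "b \<in> calB" "tail_copula (survival_cdf M) b = G" for b
  proof -
    have mG: "Min (range (\<lambda>j. \<alpha>$j * b$j)) = G" using b tail by simp
    have ge: "G \<le> \<alpha>$j * b$j" for j using mG[symmetric] by simp
    have eq: "\<alpha>$j * b$j = G" for j
    proof (rule ccontr)
      assume "\<alpha>$j * b$j \<noteq> G"
      then have lt: "G < \<alpha>$j * b$j" using ge[of j] by simp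
      have pos: "0 < \<alpha>$i * b$i" for i using ge[of i] Gpos by linarith
      have "(\<Prod>i\<in>(UNIV::'d set). G) < (\<Prod>i\<in>UNIV. \<alpha>$i * b$i)"
        by (rule prod_mono_strict[where i=j]) (use lt ge Gpos pos in auto)
      also have "\<dots> = A" using prodb(1)[OF b(1)] by (simp add: A_def prod.distrib)
      finally show False using Gn by simp
    qed
    have "b$i = G / \<alpha>$i" for i
    proof -
      have "\<alpha>$i \<noteq> 0" using apos[of i] by simp
      then show ?thesis using eq[of i] by (simp add: field_simps)
    qed
    then show ?thesis unfolding bstar_def vec_eq_iff by simp
  qed
  have G_eq: "(\<Prod>j\<in>UNIV. \<alpha>$j powr (1 / real CARD('d))) = G" by (simp add: G_def n_def)
  have part3: "\<forall>b\<in>calB. tail_copula (survival_cdf M) b = G \<longrightarrow> b = bstar"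
    using uniq by blast
  have part2: "tail_copula (survival_cdf M) bstar = G" by (rule tail_bstar)
  show ?thesis
    unfolding Let_def G_eq bstar_def[symmetric] maxeq
    by (intro conjI lim part2 part3 bstar_in refl)
qed


end
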